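(* Let $E$, $D$, $S$ be binary random variables taking values in $\{0,1\}$ such that every joint cell probability $P(E=e,D=d,S=s)$ is positive, and write $p(d,e)=P(S=1\mid D=d,E=e)$. Suppose there is no interaction of $E$ and $D$ on $S$ on the risk difference scale, i.e. $\mathrm{RD}_{ES\mid D=1}=\mathrm{RD}_{ES\mid D=0}$ (equivalently $p(1,1)-p(1,0)=p(0,1)-p(0,0)$). (a) If $p(d,e)$ is non-decreasing in both $d$ and $e$, or non-increasing in both $d$ and $e$, then $\mathrm{OR}_{ED\mid S=1}\le \mathrm{OR}_{ED}$. (b) If $p(d,e)$ is non-decreasing in one of $d,e$ and non-increasing in the other, then $\mathrm{OR}_{ED\mid S=1}\ge \mathrm{OR}_{ED}$.
   Context: For binary random variables $A,B$ and a random variable $C$, $\mathrm{OR}_{AB\mid C=c}=\frac{P(A=1,B=1\mid C=c)P(A=0,B=0\mid C=c)}{P(A=1,B=0\mid C=c)P(A=0,B=1\mid C=c)}$, $\mathrm{OR}_{AB}$ is the unconditional version, and $\mathrm{RD}_{AB\mid C=c}=P(B=1\mid A=1,C=c)-P(B=1\mid A=0,C=c)$. "Non-decreasing in $d$" means $p(1,e)\ge p(0,e)$ for each $e$; "non-decreasing in $e$" means $p(d,1)\ge p(d,0)$ for each $d$; non-increasing analogously. *)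

theory Defs
  imports Complex_Main
begin

text \<open>A joint distribution of three binary random variables (E,D,S) is represented by
its cell probabilities q e d s = P(E=e, D=d, S=s), with True encoding 1 and False encoding 0.\<close>

definition joint_pos_dist :: "(bool \<Rightarrow> bool \<Rightarrow> bool \<Rightarrow> real) \<Rightarrow> bool" where
  "joint_pos_dist q \<longleftrightarrow> (\<forall>e d s. q e d s > 0) \<and> (\<Sum>e\<in>UNIV. \<Sum>d\<in>UNIV. \<Sum>s\<in>UNIV. q e d s) = 1"

definition pS :: "(bool \<Rightarrow> bool \<Rightarrow> bool \<Rightarrow> real) \<Rightarrow> bool \<Rightarrow> bool \<Rightarrow> real" where
  "pS q d e = q e d True / (q e d True + q e d False)"

definition OR_ED_given_S1 :: "(bool \<Rightarrow> bool \<Rightarrow> bool \<Rightarrow> real) \<Rightarrow> real" where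
  "OR_ED_given_S1 q =
     ((q True True True / (\<Sum>e\<in>UNIV. \<Sum>d\<in>UNIV. q e d True)) * (q False False True / (\<Sum>e\<in>UNIV. \<Sum>d\<in>UNIV. q e d True)))
   / ((q True False True / (\<Sum>e\<in>UNIV. \<Sum>d\<in>UNIV. q e d True)) * (q False True True / (\<Sum>e\<in>UNIV. \<Sum>d\<in>UNIV. q e d True)))"

definition pED :: "(bool \<Rightarrow> bool \<Rightarrow> bool \<Rightarrow> real) \<Rightarrow> bool \<Rightarrow> bool \<Rightarrow> real" where
  "pED q e d = (\<Sum>s\<in>UNIV. q e d s)"

definition OR_ED :: "(bool \<Rightarrow> bool \<Rightarrow> bool \<Rightarrow> real) \<Rightarrow> real" where
  "OR_ED q = (pED q True True * pED q False False) / (pED q True False * pED q False True)"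

end

theory Submission
  imports Defs
begin

theorem mainTheorem3:
  fixes q :: "bool \<Rightarrow> bool \<Rightarrow> bool \<Rightarrow> real"
  assumes dist: "joint_pos_dist q"
    and noint: "pS q True True - pS q True False = pS q False True - pS q False False"
  shows "((((\<forall>e. pS q True e \<ge> pS q False e) \<and> (\<forall>d. pS q d True \<ge> pS q d False))
          \<or> ((\<forall>e. pS q True e \<le> pS q False e) \<and> (\<forall>d. pS q d True \<le> pS q d False)))
           \<longrightarrow> OR_ED_given_S1 q \<le> OR_ED q)
     \<and> ((((\<forall>e. pS q True e \<ge> pS q False e) \<and> (\<forall>d. pS q d True \<le> pS q d False))
          \<or> ((\<forall>e. pS q True e \<le> pS q False e) \<and> (\<forall>d. pS q d True \<ge> pS q d False)))
           \<longrightarrow> OR_ED_given_S1 q \<ge> OR_ED q)"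
proof -
  have pos: "\<And>e d s. q e d s > 0" using dist unfolding joint_pos_dist_def by blast
  define t where "t = (\<Sum>e\<in>UNIV. \<Sum>d\<in>UNIV. q e d True)"
  have tpos: "t > 0" unfolding t_def using pos by (simp add: UNIV_bool add_pos_pos)
  define n where "n e d = q e d True + q e d False" for e d
  have npos: "\<And>e d. n e d > 0" unfolding n_def using pos by (simp add: add_pos_pos)
  define p where "p d e = pS q d e" for d e
  have qe: "\<And>e d. q e d True = p d e * n e d"
    unfolding p_def pS_def n_def using npos[unfolded n_def] by (simp add: less_imp_neq[symmetric])
  have ppos: "\<And>d e. p d e > 0" unfolding p_def pS_def using pos npos[unfolded n_def] by simp
  have S1: "OR_ED_given_S1 q = (p True True * p False False) / (p False True * p True False)
            * ((n True True * n False False) / (n True False * n False True))"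
    unfolding OR_ED_given_S1_def t_def[symmetric] using tpos npos ppos
    by (simp add: qe field_simps)
  have O: "OR_ED q = (n True True * n False False) / (n True False * n False True)"
    unfolding OR_ED_def pED_def n_def by (simp add: UNIV_bool add.commute)
  define R where "R = (n True True * n False False) / (n True False * n False True)"
  have Rpos: "R > 0" unfolding R_def using npos by simp
  have den: "p False True * p True False > 0" using ppos by simp
  have ad: "p True True + p False False = p False True + p True False"
    using noint unfolding p_def by linarith
  have id: "p True True * p False False - p False True * p True False
      = - ((p True False - p False False) * (p False True - p False False))"
    using ad by (simp add: algebra_simps) (smt (verit) ad left_diff_distrib mult.commute)
  have le: "OR_ED_given_S1 q \<le> OR_ED q \<longleftrightarrow> p True True * p False False \<le> p False True * p True False"
  proof -
    have "OR_ED_given_S1 q \<le> OR_ED q \<longleftrightarrow> (p True True * p False False) / (p False True * p True False) \<le> 1"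
      unfolding S1 O R_def[symmetric] using Rpos
      by (metis mult.commute mult_le_cancel_left_pos mult.right_neutral)
    also have "\<dots> \<longleftrightarrow> p True True * p False False \<le> p False True * p True False"
      using den by (simp add: divide_le_eq)
    finally show ?thesis .
  qed
  have ge: "OR_ED_given_S1 q \<ge> OR_ED q \<longleftrightarrow> p True True * p False False \<ge> p False True * p True False"
  proof -
    have "OR_ED_given_S1 q \<ge> OR_ED q \<longleftrightarrow> (p True True * p False False) / (p False True * p True False) \<ge> 1"
      unfolding S1 O R_def[symmetric] using Rpos
      by (metis mult.commute mult_le_cancel_left_pos mult.right_neutral)
    also have "\<dots> \<longleftrightarrow> p True True * p False False \<ge> p False True * p True False"
      using den by (simp add: le_divide_eq)
    finally show ?thesis .
  qed
  have A: "(p True False - p False False) * (p False True - p False False) \<ge> 0"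
    if "(p True False - p False False) \<ge> 0 \<and> (p False True - p False False) \<ge> 0
      \<or> (p True False - p False False) \<le> 0 \<and> (p False True - p False False) \<le> 0"
    using that by (auto intro: mult_nonneg_nonneg mult_nonpos_nonpos)
  have B: "(p True False - p False False) * (p False True - p False False) \<le> 0"
    if "(p True False - p False False) \<ge> 0 \<and> (p False True - p False False) \<le> 0
      \<or> (p True False - p False False) \<le> 0 \<and> (p False True - p False False) \<ge> 0"
    using that by (auto intro: mult_nonneg_nonpos mult_nonpos_nonneg)
  show ?thesis
    unfolding le ge p_def[symmetric]
    using A B id by (smt (verit))
qed

end
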